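(* Let $G$ be a $\Delta$-regular bipartite graph on $2n$ vertices, where $n$ is even and $\Delta$ is even. Then the Alon-Tarsi number of $G$ equals $\frac{\Delta}{2}$.
   Context: For a graph $G$ with vertices ordered $x_1,\dots,x_N$ (treated as variables over a field of characteristic $0$), the graph polynomial is $P_G=\prod_{i<j,\ x_ix_j\in E(G)}(x_i-x_j)$. Here the Alon-Tarsi number of $G$ is defined as $\min\max_k i_k$, the minimum being over all monomials $x_1^{i_1}\cdots x_N^{i_N}$ with nonzero coefficient in $P_G$ (no $+1$ is added). *)

theory Defs
  imports "HOL-Library.Poly_Mapping"
begin

text \<open>Multivariate polynomials in variables x_0, x_1, ... with coefficients in 'a:
  monomials are finitely supported exponent vectors.\<close>
type_synonym 'a mpoly = "(nat \<Rightarrow>\<^sub>0 nat) \<Rightarrow>\<^sub>0 'a"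

definition mvar :: "nat \<Rightarrow> 'a::comm_ring_1 mpoly" where
  "mvar i = Poly_Mapping.single (Poly_Mapping.single i 1) 1"

definition simple_graph_on :: "nat \<Rightarrow> nat set set \<Rightarrow> bool" where
  "simple_graph_on N E \<longleftrightarrow> (\<forall>e\<in>E. \<exists>i j. i < j \<and> j < N \<and> e = {i, j})"

definition degree :: "nat set set \<Rightarrow> nat \<Rightarrow> nat" where
  "degree E v = card {e \<in> E. v \<in> e}"

definition regular_graph :: "nat \<Rightarrow> nat set set \<Rightarrow> nat \<Rightarrow> bool" where
  "regular_graph N E d \<longleftrightarrow> (\<forall>v < N. degree E v = d)"

definition bipartite_graph :: "nat \<Rightarrow> nat set set \<Rightarrow> bool" where
  "bipartite_graph N E \<longleftrightarrow> (\<exists>A \<subseteq> {0..<N}. \<forall>e\<in>E. card (e \<inter> A) = 1)"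

definition graph_poly :: "nat set set \<Rightarrow> 'a::comm_ring_1 mpoly" where
  "graph_poly E = (\<Prod>e\<in>E. mvar (Min e) - mvar (Max e))"

text \<open>Alon-Tarsi number (without +1) of a polynomial in variables x_0..x_{N-1}:
  min over monomials with nonzero coefficient of the maximal exponent.\<close>
definition alon_tarsi_number :: "nat \<Rightarrow> 'a::comm_ring_1 mpoly \<Rightarrow> nat" where
  "alon_tarsi_number N P =
     Min {Max (Poly_Mapping.lookup (m :: nat \<Rightarrow>\<^sub>0 nat) ` {0..<N}) | m. Poly_Mapping.lookup P m \<noteq> 0}"

end

theory Submission
  imports Defs
begin


definition cnt :: "'i set \<Rightarrow> ('i \<Rightarrow> nat) \<Rightarrow> nat \<Rightarrow> nat" where
  "cnt I f v = (\<Sum>k\<in>I. if f k = v then 1 else 0)"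

definition tlf :: "'i set \<Rightarrow> ('i \<Rightarrow> nat) \<Rightarrow> ('i \<Rightarrow> nat) \<Rightarrow> 'i \<Rightarrow> nat" where
  "tlf S p q k = (if k \<in> S then p k else q k)"

lemma cnt_remove:
  assumes "finite I" "i \<in> I"
  shows "cnt I f v = (if f i = v then 1 else 0) + cnt (I - {i}) f v"
  unfolding cnt_def using assms by (simp add: sum.remove)

lemma cnt_cong:
  assumes "\<And>k. k \<in> I \<Longrightarrow> f k = g k"
  shows "cnt I f v = cnt I g v"
  unfolding cnt_def using assms by (auto intro: sum.cong)

lemma cnt_ex:
  assumes "cnt I f v \<noteq> 0"
  shows "\<exists>k\<in>I. f k = v"
proof (rule ccontr)
  assume "\<not> ?thesis"
  then have "cnt I f v = 0" unfolding cnt_def by (auto intro: sum.neutral)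
  with assms show False by simp
qed

lemma euler_orient:
  fixes p q :: "'i \<Rightarrow> nat"
  assumes "finite I" "\<forall>v. even (cnt I p v + cnt I q v)"
  shows "\<exists>S\<subseteq>I. \<forall>v. cnt I (tlf S p q) v = cnt I (tlf S q p) v"
  using assms
proof (induction "card I" arbitrary: I p q rule: less_induct)
  case less
  show ?case
  proof (cases "I = {}")
    case True
    then show ?thesis by (auto simp: cnt_def)
  next
    case False
    then obtain i where i: "i \<in> I" by auto
    define I1 where "I1 = I - {i}"
    have fI1: "finite I1" using less.prems I1_def by auto
    have cI1: "card I1 < card I" unfolding I1_def using i less.prems(1) by (rule card_Diff1_less[rotated])
    have degI: "cnt I p v + cnt I q v = (if p i = v then 1 else 0) + (if q i = v then 1 else 0) + (cnt I1 p v + cnt I1 q v)" for v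
      using cnt_remove[OF less.prems(1) i] I1_def by simp
    show ?thesis
    proof (cases "p i = q i")
      case True
      have "\<forall>v. even (cnt I1 p v + cnt I1 q v)"
      proof
        fix v
        have "even (cnt I p v + cnt I q v)" using less.prems(2) by blast
        then show "even (cnt I1 p v + cnt I1 q v)" using degI[of v] True by (auto split: if_splits)
      qed
      from less.hyps[OF cI1 fI1 this] obtain S1 where S1: "S1 \<subseteq> I1" "\<forall>v. cnt I1 (tlf S1 p q) v = cnt I1 (tlf S1 q p) v" by blast
      define S where "S = insert i S1"
      have "\<forall>v. cnt I (tlf S p q) v = cnt I (tlf S q p) v"
      proof
        fix v
        have e1: "cnt I1 (tlf S p q) v = cnt I1 (tlf S1 p q) v" "cnt I1 (tlf S q p) v = cnt I1 (tlf S1 q p) v"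
          by (auto intro!: cnt_cong simp: tlf_def S_def I1_def split: if_splits)
        show "cnt I (tlf S p q) v = cnt I (tlf S q p) v"
          using cnt_remove[OF less.prems(1) i, of "tlf S p q" v] cnt_remove[OF less.prems(1) i, of "tlf S q p" v]
            e1 S1(2) True unfolding I1_def[symmetric] by (simp add: tlf_def S_def)
      qed
      moreover have "S \<subseteq> I" using S1 i I1_def S_def by auto
      ultimately show ?thesis by blast
    next
      case False
      define b where "b = q i"
      have "cnt I1 p b + cnt I1 q b \<noteq> 0"
      proof
        assume "cnt I1 p b + cnt I1 q b = 0"
        then have "cnt I p b + cnt I q b = 1" using degI[of b] False b_def by simp
        then show False using less.prems(2) by (metis odd_one)
      qed
      then obtain j where j: "j \<in> I1" "p j = b \<or> q j = b" using cnt_ex by (metis add_eq_0_iff_both_eq_0)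
      have ij: "i \<noteq> j" "j \<in> I" using j I1_def by auto
      define I' where "I' = I - {j}"
      have fI': "finite I'" using less.prems I'_def by auto
      have cI': "card I' < card I" unfolding I'_def using ij(2) less.prems(1) by (rule card_Diff1_less[rotated])
      have iI': "i \<in> I'" using i ij I'_def by auto
      define c where "c = (if p j = b then q j else p j)"
      define q' where "q' = q(i := c)"
      have split2: "cnt I f v = (if f j = v then 1 else 0) + (if f i = v then 1 else 0) + cnt (I' - {i}) f v" for f v
        using cnt_remove[OF less.prems(1) ij(2), of f v] cnt_remove[OF fI' iI', of f v] unfolding I'_def by simp
      have split1: "cnt I' f v = (if f i = v then 1 else 0) + cnt (I' - {i}) f v" for f v
        using cnt_remove[OF fI' iI', of f v] by simp
      have rq: "cnt (I' - {i}) q' v = cnt (I' - {i}) q v" for v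
        by (rule cnt_cong) (simp add: q'_def)
      have "\<forall>v. even (cnt I' p v + cnt I' q' v)"
      proof
        fix v
        have "even (cnt I p v + cnt I q v)" using less.prems(2) by blast
        then show "even (cnt I' p v + cnt I' q' v)"
          using split2[of p v] split2[of q v] split1[of p v] split1[of q' v] rq[of v] j(2) False
          unfolding b_def c_def q'_def by (auto split: if_splits)
      qed
      from less.hyps[OF cI' fI' this] obtain S' where S': "S' \<subseteq> I'" "\<forall>v. cnt I' (tlf S' p q') v = cnt I' (tlf S' q' p) v" by blast
      have jS': "j \<notin> S'" using S' I'_def by auto
      define S where "S = (if p j = b then (if i \<in> S' then insert j S' else S') else (if i \<in> S' then S' else insert j S'))"
      have "\<forall>v. cnt I (tlf S p q) v = cnt I (tlf S q p) v"
      proof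
        fix v
        have e1: "cnt (I' - {i}) (tlf S p q) v = cnt (I' - {i}) (tlf S' p q') v" "cnt (I' - {i}) (tlf S q p) v = cnt (I' - {i}) (tlf S' q' p) v"
          by (auto intro!: cnt_cong simp: tlf_def S_def I'_def q'_def split: if_splits)
        have tj: "tlf S p q j = (if i \<in> S' then b else c)" and hj: "tlf S q p j = (if i \<in> S' then c else b)"
          using j(2) jS' unfolding tlf_def S_def c_def by auto
        have ti: "tlf S p q i = (if i \<in> S' then p i else b)" and hi: "tlf S q p i = (if i \<in> S' then b else p i)"
          using ij(1) unfolding tlf_def S_def b_def by auto
        have ti': "tlf S' p q' i = (if i \<in> S' then p i else c)" and hi': "tlf S' q' p i = (if i \<in> S' then c else p i)"
          unfolding tlf_def q'_def by auto
        have "cnt I' (tlf S' p q') v = cnt I' (tlf S' q' p) v" using S'(2) by blast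
        then show "cnt I (tlf S p q) v = cnt I (tlf S q p) v"
          using split2[of "tlf S p q" v] split2[of "tlf S q p" v] split1[of "tlf S' p q'" v] split1[of "tlf S' q' p" v]
            e1 unfolding tj hj ti hi ti' hi' by (cases "i \<in> S'") simp_all
      qed
      moreover have "S \<subseteq> I" using S' ij I'_def S_def by auto
      ultimately show ?thesis by blast
    qed
  qed
qed



lemma prod_single:
  assumes "finite S"
  shows "(\<Prod>k\<in>S. Poly_Mapping.single (m k) (u k)) = Poly_Mapping.single (\<Sum>k\<in>S. m k) (\<Prod>k\<in>S. u k :: 'a::comm_ring_1)"
  using assms by (induction S rule: finite_induct) (simp_all add: mult_single)

definition mon :: "'i set \<Rightarrow> ('i \<Rightarrow> nat) \<Rightarrow> ('i \<Rightarrow> nat) \<Rightarrow> 'i set \<Rightarrow> (nat \<Rightarrow>\<^sub>0 nat)" where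
  "mon I p q S = (\<Sum>k\<in>S. Poly_Mapping.single (p k) 1) + (\<Sum>k\<in>I-S. Poly_Mapping.single (q k) 1)"

lemma expand:
  assumes "finite I"
  shows "(\<Prod>k\<in>I. Poly_Mapping.single (Poly_Mapping.single (p k) 1) (u k) + Poly_Mapping.single (Poly_Mapping.single (q k) 1) (w k))
    = (\<Sum>S\<in>Pow I. Poly_Mapping.single (mon I p q S) ((\<Prod>k\<in>S. u k) * (\<Prod>k\<in>I-S. w k) :: 'a::comm_ring_1))"
  unfolding prod_add[OF assms] mon_def
proof (rule sum.cong)
  fix S assume "S \<in> Pow I"
  then have "finite S" "finite (I - S)" using assms finite_subset by auto
  then show "(\<Prod>k\<in>S. Poly_Mapping.single (Poly_Mapping.single (p k) 1) (u k)) *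
         (\<Prod>k\<in>I - S. Poly_Mapping.single (Poly_Mapping.single (q k) 1) (w k)) =
         Poly_Mapping.single ((\<Sum>k\<in>S. Poly_Mapping.single (p k) 1) + (\<Sum>k\<in>I - S. Poly_Mapping.single (q k) 1))
          (prod u S * prod w (I - S))"
    by (simp add: prod_single mult_single)
qed simp

lemma lookup_mon:
  assumes "finite I" "S \<subseteq> I"
  shows "Poly_Mapping.lookup (mon I p q S) v = cnt I (tlf S p q) v"
proof -
  have "cnt I (tlf S p q) v = (\<Sum>k\<in>I - S. if tlf S p q k = v then 1 else 0) + (\<Sum>k\<in>S. if tlf S p q k = v then 1 else 0)"
    unfolding cnt_def by (rule sum.subset_diff[OF assms(2) assms(1)])
  also have "\<dots> = (\<Sum>k\<in>I - S. if q k = v then 1 else 0) + (\<Sum>k\<in>S. if p k = v then 1 else 0)"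
    by (auto simp: tlf_def intro!: sum.cong arg_cong2[where f="(+)"])
  finally have R: "cnt I (tlf S p q) v = (\<Sum>k\<in>I - S. if q k = v then 1 else 0) + (\<Sum>k\<in>S. if p k = v then 1 else 0)" .
  have L: "Poly_Mapping.lookup (mon I p q S) v = (\<Sum>k\<in>S. if p k = v then 1 else 0) + (\<Sum>k\<in>I-S. if q k = v then 1 else 0)"
    unfolding mon_def lookup_add lookup_sum lookup_single when_def by simp
  show ?thesis using L R by simp
qed

lemma cnt_sum:
  assumes "finite V" "finite E"
  shows "(\<Sum>v\<in>V. cnt E f v) = (\<Sum>k\<in>E. if f k \<in> V then 1 else 0)"
  unfolding cnt_def using assms
  by (subst sum.swap) (simp add: sum.delta)



theorem mainTheorem5:
  fixes n \<Delta> :: nat and E :: "nat set set"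
  assumes "n > 0" and "even n" and "even \<Delta>"
    and "simple_graph_on (2 * n) E"
    and "regular_graph (2 * n) E \<Delta>"
    and "bipartite_graph (2 * n) E"
  shows "alon_tarsi_number (2 * n) (graph_poly E :: 'a::field_char_0 mpoly) = \<Delta> div 2"
proof -
  have sg: "\<forall>e\<in>E. \<exists>i j. i < j \<and> j < 2 * n \<and> e = {i, j}" using assms(4) unfolding simple_graph_on_def .
  have "e \<subseteq> {0..<2*n}" if "e \<in> E" for e
  proof -
    from bspec[OF sg that] obtain i j where "i < j" "j < 2*n" "e = {i,j}" by blast
    then show ?thesis by auto
  qed
  then have "E \<subseteq> Pow {0..<2*n}" by blast
  then have fE: "finite E" by (rule finite_subset) simp
  obtain A where A: "A \<subseteq> {0..<2*n}" "\<forall>e\<in>E. card (e \<inter> A) = 1" using assms(6) unfolding bipartite_graph_def by blast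
  define a where "a e = (if Min e \<in> A then Min e else Max e)" for e :: "nat set"
  define b where "b e = (if Min e \<in> A then Max e else Min e)" for e :: "nat set"
  define s where "s e = (if Min e \<in> A then 1 else -1 :: 'a)" for e :: "nat set"
  have edge: "a e \<in> A \<and> b e \<notin> A \<and> a e < 2*n \<and> b e < 2*n \<and> a e \<noteq> b e \<and> (\<forall>v. v \<in> e \<longleftrightarrow> v = a e \<or> v = b e)" if "e \<in> E" for e
  proof -
    from bspec[OF sg that] obtain i j where ij: "i < j" "j < 2*n" "e = {i,j}" by blast
    have mm: "Min e = i" "Max e = j" unfolding ij(3) using ij(1) by simp_all
    have "card (e \<inter> A) = 1" using A(2) that by blast
    then have c1: "card ({i,j} \<inter> A) = 1" unfolding ij(3) .
    have iff: "(i \<in> A) = (j \<notin> A)"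
    proof (cases "i \<in> A")
      case True
      show ?thesis
      proof (rule ccontr)
        assume "(i \<in> A) \<noteq> (j \<notin> A)"
        then have "{i,j} \<inter> A = {i,j}" using True by auto
        then show False using c1 ij(1) by simp
      qed
    next
      case False
      show ?thesis
      proof (rule ccontr)
        assume "(i \<in> A) \<noteq> (j \<notin> A)"
        then have "{i,j} \<inter> A = {}" using False by auto
        then show False using c1 by simp
      qed
    qed
    have ae: "a e = (if i \<in> A then i else j)" "b e = (if i \<in> A then j else i)"
      unfolding a_def b_def mm by simp_all
    have mem: "\<forall>v. v \<in> e \<longleftrightarrow> v = i \<or> v = j" using ij(3) by simp
    show ?thesis unfolding ae using mem ij(1,2) iff by auto
  qed
  have aeA: "\<And>e. e \<in> E \<Longrightarrow> a e \<in> A" and beA: "\<And>e. e \<in> E \<Longrightarrow> b e \<notin> A"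
    and ae2: "\<And>e. e \<in> E \<Longrightarrow> a e < 2*n" and be2: "\<And>e. e \<in> E \<Longrightarrow> b e < 2*n"
    and memE: "\<And>e v. e \<in> E \<Longrightarrow> v \<in> e \<longleftrightarrow> v = a e \<or> v = b e"
    and abne: "\<And>e. e \<in> E \<Longrightarrow> a e \<noteq> b e"
    using edge by blast+
  have factor: "mvar (Min e) - mvar (Max e) =
      Poly_Mapping.single (Poly_Mapping.single (a e) 1) (s e) + Poly_Mapping.single (Poly_Mapping.single (b e) 1) (- s e)" for e
    unfolding mvar_def a_def b_def s_def by (cases "Min e \<in> A") (simp_all add: single_uminus)
  define K where "K S = (\<Prod>k\<in>S. s k) * (\<Prod>k\<in>E-S. - s k)" for S
  have GP: "(graph_poly E :: 'a mpoly) = (\<Sum>S\<in>Pow E. Poly_Mapping.single (mon E a b S) (K S))"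
    unfolding graph_poly_def factor K_def by (rule expand[OF fE])
  have coeff: "Poly_Mapping.lookup (graph_poly E :: 'a mpoly) m = (\<Sum>S\<in>Pow E. if mon E a b S = m then K S else 0)" for m
    unfolding GP lookup_sum lookup_single when_def by simp
  have Kc: "K S = (\<Prod>k\<in>E. s k) * (-1) ^ card (E - S)" if "S \<subseteq> E" for S
  proof -
    have "(\<Prod>k\<in>E-S. - s k) = (\<Prod>k\<in>E-S. (-1) * s k)" by simp
    also have "\<dots> = (-1) ^ card (E - S) * (\<Prod>k\<in>E-S. s k)" unfolding prod.distrib by simp
    finally have "K S = (-1) ^ card (E - S) * ((\<Prod>k\<in>E-S. s k) * (\<Prod>k\<in>S. s k))"
      unfolding K_def by (simp add: algebra_simps)
    also have "(\<Prod>k\<in>E-S. s k) * (\<Prod>k\<in>S. s k) = (\<Prod>k\<in>E. s k)"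
      using prod.subset_diff[OF that fE, of s] by simp
    finally show ?thesis by simp
  qed
  have degE: "cnt E a v + cnt E b v = (if v < 2*n then \<Delta> else 0)" for v
  proof -
    have "cnt E a v + cnt E b v = (\<Sum>e\<in>E. if v \<in> e then 1 else 0)"
      unfolding cnt_def sum.distrib[symmetric]
    proof (rule sum.cong)
      fix e assume "e \<in> E"
      then show "(if a e = v then 1 else 0) + (if b e = v then 1 else 0) = (if v \<in> e then 1 else (0::nat))"
        using memE[of e v] abne[of e] by auto
    qed simp
    also have "\<dots> = card {e \<in> E. v \<in> e}"
      using sum.inter_filter[OF fE, of "\<lambda>_. 1::nat" "\<lambda>e. v \<in> e"] by simp
    also have "\<dots> = degree E v" unfolding degree_def ..
    also have "\<dots> = (if v < 2*n then \<Delta> else 0)"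
    proof (cases "v < 2*n")
      case True
      then show ?thesis using assms(5) unfolding regular_graph_def by simp
    next
      case False
      have "\<forall>e\<in>E. v \<notin> e" using False memE ae2 be2 by fastforce
      then have emp: "{e \<in> E. v \<in> e} = {}" by blast
      show ?thesis using False unfolding degree_def emp by simp
    qed
    finally show ?thesis .
  qed
  have "\<forall>v. even (cnt E a v + cnt E b v)" using degE assms(3) by simp
  from euler_orient[OF fE this] obtain S0 where S0: "S0 \<subseteq> E" "\<forall>v. cnt E (tlf S0 a b) v = cnt E (tlf S0 b a) v" by blast
  have tot: "cnt E (tlf S a b) v + cnt E (tlf S b a) v = cnt E a v + cnt E b v" for S v
    unfolding cnt_def sum.distrib[symmetric] by (rule sum.cong) (auto simp: tlf_def)
  define m0 where "m0 = mon E a b S0"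
  have m0v: "Poly_Mapping.lookup m0 v = (if v < 2*n then \<Delta> div 2 else 0)" for v
  proof -
    have "Poly_Mapping.lookup m0 v = cnt E (tlf S0 a b) v" unfolding m0_def by (rule lookup_mon[OF fE S0(1)])
    moreover have "cnt E (tlf S0 a b) v + cnt E (tlf S0 a b) v = (if v < 2*n then \<Delta> else 0)"
      using tot[of S0 v] degE[of v] S0(2) by simp
    ultimately show ?thesis by auto
  qed
  define B where "B = {0..<2*n} - A"
  have cardES: "card (E - S) = (\<Sum>v\<in>B. Poly_Mapping.lookup (mon E a b S) v)" if "S \<subseteq> E" for S
  proof -
    have "(\<Sum>v\<in>B. Poly_Mapping.lookup (mon E a b S) v) = (\<Sum>v\<in>B. cnt E (tlf S a b) v)"
      using lookup_mon[OF fE that] by simp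
    also have "\<dots> = (\<Sum>k\<in>E. if tlf S a b k \<in> B then 1 else 0)"
      by (rule cnt_sum) (simp_all add: B_def fE)
    also have "\<dots> = (\<Sum>k\<in>E. if k \<notin> S then 1 else 0)"
    proof (rule sum.cong)
      fix k assume "k \<in> E"
      then show "(if tlf S a b k \<in> B then 1 else 0) = (if k \<notin> S then 1 else (0::nat))"
        using aeA[of k] beA[of k] be2[of k] unfolding tlf_def B_def by auto
    qed simp
    also have "\<dots> = card {k \<in> E. k \<notin> S}"
      using sum.inter_filter[OF fE, of "\<lambda>_. 1::nat" "\<lambda>k. k \<notin> S"] by simp
    also have "{k \<in> E. k \<notin> S} = E - S" by auto
    finally show ?thesis by simp
  qed
  define T where "T = {S \<in> Pow E. mon E a b S = m0}"
  have fT: "finite T" unfolding T_def using fE by simp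
  have S0T: "S0 \<in> T" unfolding T_def m0_def using S0(1) by simp
  have c0: "Poly_Mapping.lookup (graph_poly E :: 'a mpoly) m0 = of_nat (card T) * K S0"
  proof -
    have "Poly_Mapping.lookup (graph_poly E :: 'a mpoly) m0 = (\<Sum>S\<in>T. K S)"
      unfolding coeff T_def using sum.inter_filter[of "Pow E" K "\<lambda>S. mon E a b S = m0"] fE by simp
    also have "\<dots> = (\<Sum>S\<in>T. K S0)"
    proof (rule sum.cong)
      fix S assume "S \<in> T"
      then have "S \<subseteq> E" "mon E a b S = m0" unfolding T_def by auto
      then have "card (E - S) = card (E - S0)" using cardES[of S] cardES[OF S0(1)] unfolding m0_def by simp
      then show "K S = K S0" using Kc[OF \<open>S \<subseteq> E\<close>] Kc[OF S0(1)] by simp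
    qed simp
    finally show ?thesis by simp
  qed
  have sne: "(\<Prod>k\<in>E. s k) \<noteq> 0" using fE by (simp add: s_def)
  have "card T \<noteq> 0" using fT S0T by auto
  then have c0ne: "Poly_Mapping.lookup (graph_poly E :: 'a mpoly) m0 \<noteq> 0"
    unfolding c0 Kc[OF S0(1)] using sne by simp
  have "Poly_Mapping.lookup m0 ` {0..<2*n} = (\<lambda>_. \<Delta> div 2) ` {0..<2*n}"
    by (rule image_cong) (simp_all add: m0v)
  also have "\<dots> = {\<Delta> div 2}" using assms(1) by (intro image_constant[of 0]) simp
  finally have max0: "Max (Poly_Mapping.lookup m0 ` {0..<2*n}) = \<Delta> div 2" by simp
  have cardE: "card E = n * \<Delta>"
  proof -
    have "(\<Sum>v\<in>{0..<2*n}. cnt E a v + cnt E b v) = (\<Sum>v\<in>{0..<2*n}. \<Delta>)"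
      using degE by simp
    also have "\<dots> = 2 * n * \<Delta>" by simp
    finally have "(\<Sum>v\<in>{0..<2*n}. cnt E a v) + (\<Sum>v\<in>{0..<2*n}. cnt E b v) = 2 * n * \<Delta>"
      by (simp add: sum.distrib)
    moreover have "(\<Sum>v\<in>{0..<2*n}. cnt E a v) = card E"
      using cnt_sum[of "{0..<2*n}" E a] fE ae2 by simp
    moreover have "(\<Sum>v\<in>{0..<2*n}. cnt E b v) = card E"
      using cnt_sum[of "{0..<2*n}" E b] fE be2 by simp
    ultimately show ?thesis by simp
  qed
  have lower: "\<Delta> div 2 \<le> Max (Poly_Mapping.lookup m ` {0..<2*n})"
    if "Poly_Mapping.lookup (graph_poly E :: 'a mpoly) m \<noteq> 0" for m
  proof -
    obtain S where S: "S \<subseteq> E" "mon E a b S = m"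
    proof (rule ccontr)
      assume "\<not> thesis"
      with that(1) have "\<forall>S\<in>Pow E. mon E a b S \<noteq> m" by (auto simp: that)
      then have "Poly_Mapping.lookup (graph_poly E :: 'a mpoly) m = 0" unfolding coeff by simp
      with \<open>Poly_Mapping.lookup (graph_poly E :: 'a mpoly) m \<noteq> 0\<close> show False by simp
    qed
    define M where "M = Max (Poly_Mapping.lookup m ` {0..<2*n})"
    have "(\<Sum>v\<in>{0..<2*n}. Poly_Mapping.lookup m v) = (\<Sum>v\<in>{0..<2*n}. cnt E (tlf S a b) v)"
      using lookup_mon[OF fE S(1), of a b] unfolding S(2) by simp
    also have "\<dots> = (\<Sum>k\<in>E. if tlf S a b k \<in> {0..<2*n} then 1 else 0)"
      by (rule cnt_sum) (simp_all add: fE)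
    also have "\<dots> = (\<Sum>k\<in>E. 1)"
      by (rule sum.cong) (auto simp: tlf_def ae2 be2)
    finally have "(\<Sum>v\<in>{0..<2*n}. Poly_Mapping.lookup m v) = n * \<Delta>" using cardE by simp
    moreover have "(\<Sum>v\<in>{0..<2*n}. Poly_Mapping.lookup m v) \<le> card {0..<2*n} * M"
    proof -
      have "\<And>i. i \<in> {0..<2*n} \<Longrightarrow> Poly_Mapping.lookup m i \<le> M" unfolding M_def by (rule Max_ge) auto
      then have "(\<Sum>v\<in>{0..<2*n}. Poly_Mapping.lookup m v) \<le> of_nat (card {0..<2*n}) * M" by (rule sum_bounded_above)
      then show ?thesis by simp
    qed
    ultimately have "n * \<Delta> \<le> n * (2 * M)" by simp
    then have "\<Delta> \<le> 2 * M" using assms(1) by simp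
    then show ?thesis unfolding M_def by simp
  qed
  have fin: "finite {Max (Poly_Mapping.lookup m ` {0..<2*n}) | m. Poly_Mapping.lookup (graph_poly E :: 'a mpoly) m \<noteq> 0}"
  proof -
    have "{m. Poly_Mapping.lookup (graph_poly E :: 'a mpoly) m \<noteq> 0} = Poly_Mapping.keys (graph_poly E :: 'a mpoly)"
      unfolding lookup_not_eq_zero_eq_in_keys by simp
    then have "finite {m. Poly_Mapping.lookup (graph_poly E :: 'a mpoly) m \<noteq> 0}" by simp
    then show ?thesis by (rule finite_image_set)
  qed
  show ?thesis unfolding alon_tarsi_number_def
    by (rule Min_eqI[OF fin]) (use lower c0ne max0[symmetric] in auto)
qed

end
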